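(* Let $X$ be a complete nonsingular toric variety which is Fano and all of whose toric subvarieties are Fano, with fan $\Delta$. Let $\langle\rho'_1,\ldots,\rho'_k\rangle$ be a cone of $\Delta$ and let $w=a_1\rho'_1+\cdots+a_k\rho'_k$ with integers $a_i\ge1$ for each $i$ and $a_1\ge2$. If $\{\rho_1,\ldots,\rho_j\}$ is any linearly independent set of ray generators of $\Delta$, then $\rho_1+\cdots+\rho_j\neq w$.
   Context: Ray generators are the primitive lattice generators of the rays of $\Delta$. *)

theory Defs
  imports "HOL-Analysis.Analysis"
begin

text \<open>Lattice N = Z^n inside N_R = R^n, with n = CARD('n).
  A fan is represented by the set of its cones, each (simplicial, since the fan
  is smooth) cone being given by the finite set of its ray generators.\<close>

definition lattice_pt :: "real^'n \<Rightarrow> bool" where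
  "lattice_pt x \<longleftrightarrow> (\<forall>i. x $ i \<in> \<int>)"

definition pos_hull :: "(real^'n) set \<Rightarrow> (real^'n) set" where
  "pos_hull S = {y. \<exists>c. (\<forall>x\<in>S. c x \<ge> 0) \<and> y = (\<Sum>x\<in>S. c x *\<^sub>R x)}"

definition int_span :: "(real^'n) set \<Rightarrow> (real^'n) set" where
  "int_span S = {y. \<exists>c. (\<forall>x\<in>S. c x \<in> \<int>) \<and> y = (\<Sum>x\<in>S. c x *\<^sub>R x)}"

definition lattice_basis :: "(real^'n) set \<Rightarrow> bool" where
  "lattice_basis B \<longleftrightarrow> finite B \<and> independent B \<and> card B = CARD('n)
      \<and> int_span B = {x. lattice_pt x}"

definition complete_smooth_fan :: "(real^'n) set set \<Rightarrow> bool" where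
  "complete_smooth_fan \<Delta> \<longleftrightarrow>
     finite \<Delta> \<and> \<Delta> \<noteq> {} \<and>
     (\<forall>\<sigma>\<in>\<Delta>. \<exists>B. lattice_basis B \<and> \<sigma> \<subseteq> B) \<and>
     (\<forall>\<sigma>\<in>\<Delta>. \<forall>\<tau>. \<tau> \<subseteq> \<sigma> \<longrightarrow> \<tau> \<in> \<Delta>) \<and>
     (\<forall>\<sigma>\<in>\<Delta>. \<forall>\<sigma>'\<in>\<Delta>. pos_hull \<sigma> \<inter> pos_hull \<sigma>' = pos_hull (\<sigma> \<inter> \<sigma>')) \<and>
     (\<Union>\<sigma>\<in>\<Delta>. pos_hull \<sigma>) = UNIV"

definition ray_gens :: "(real^'n) set set \<Rightarrow> (real^'n) set" where
  "ray_gens \<Delta> = {\<rho>. {\<rho>} \<in> \<Delta>}"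

definition maximal_cone :: "(real^'n) set set \<Rightarrow> (real^'n) set \<Rightarrow> bool" where
  "maximal_cone \<Delta> \<sigma> \<longleftrightarrow> \<sigma> \<in> \<Delta> \<and> \<not> (\<exists>\<sigma>'\<in>\<Delta>. \<sigma> \<subset> \<sigma>')"

text \<open>The torus-invariant subvariety V(tau) of the smooth complete toric variety of the
  fan has fan Star(tau) in N/N_tau.  It is Fano iff the anticanonical support function
  is strictly convex: for each maximal cone sigma containing tau there is a linear
  functional u on N/N_tau (i.e. u vanishing on tau) equal to 1 on the generators of
  sigma not in tau and < 1 on all other ray generators of Star(tau).
  For tau = {} this is the Fano condition for X itself.\<close>
definition fano_orbit_closure :: "(real^'n) set set \<Rightarrow> (real^'n) set \<Rightarrow> bool" where
  "fano_orbit_closure \<Delta> \<tau> \<longleftrightarrow>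
     (\<forall>\<sigma>. maximal_cone \<Delta> \<sigma> \<and> \<tau> \<subseteq> \<sigma> \<longrightarrow>
        (\<exists>u::real^'n. (\<forall>\<rho>\<in>\<tau>. u \<bullet> \<rho> = 0) \<and> (\<forall>\<rho>\<in>\<sigma> - \<tau>. u \<bullet> \<rho> = 1) \<and>
           (\<forall>\<rho>. \<rho> \<notin> \<sigma> \<and> insert \<rho> \<tau> \<in> \<Delta> \<longrightarrow> u \<bullet> \<rho> < 1)))"

end

theory Submission
  imports Defs
begin

locale fanctx =
  fixes \<Delta> :: "(real^'n) set set"
  assumes fan: "complete_smooth_fan \<Delta>"
    and fano_all: "\<forall>\<tau>\<in>\<Delta>. fano_orbit_closure \<Delta> \<tau>"
begin

lemma finDelta: "finite \<Delta>" using fan unfolding complete_smooth_fan_def by auto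
lemma subcl: "\<sigma> \<in> \<Delta> \<Longrightarrow> \<tau> \<subseteq> \<sigma> \<Longrightarrow> \<tau> \<in> \<Delta>"
  using fan unfolding complete_smooth_fan_def by auto
lemma inter: "\<sigma> \<in> \<Delta> \<Longrightarrow> \<delta> \<in> \<Delta> \<Longrightarrow> pos_hull \<sigma> \<inter> pos_hull \<delta> = pos_hull (\<sigma> \<inter> \<delta>)"
  using fan unfolding complete_smooth_fan_def by auto
lemma complete: "\<exists>\<sigma>\<in>\<Delta>. x \<in> pos_hull \<sigma>"
  using fan unfolding complete_smooth_fan_def by auto
lemma inbasis: "\<sigma> \<in> \<Delta> \<Longrightarrow> \<exists>B. lattice_basis B \<and> \<sigma> \<subseteq> B"
  using fan unfolding complete_smooth_fan_def by auto

lemma lb_props: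
  fixes B :: "(real^'n) set"
  assumes "lattice_basis B"
  shows "finite B" "independent B" "card B = CARD('n)" "span B = UNIV"
    "int_span B = {x. lattice_pt x}"
proof -
  show f: "finite B" and i: "independent B" and c: "card B = CARD('n)"
    and "int_span B = {x. lattice_pt x}" using assms unfolding lattice_basis_def by auto
  have "UNIV \<subseteq> span B"
    by (rule card_ge_dim_independent) (use i c in \<open>auto simp: dim_UNIV\<close>)
  then show "span B = UNIV" by auto
qed

lemma cone_fin: "\<sigma> \<in> \<Delta> \<Longrightarrow> finite \<sigma>"
  using inbasis lb_props finite_subset by metis
lemma cone_indep: "\<sigma> \<in> \<Delta> \<Longrightarrow> independent \<sigma>"
  using inbasis lb_props independent_mono by metis

lemma empty_in: "{} \<in> \<Delta>"
  using fan subcl unfolding complete_smooth_fan_def by blast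

lemma ray_lattice:
  assumes "{g} \<in> \<Delta>" shows "lattice_pt g"
proof -
  obtain B where B: "lattice_basis B" "{g} \<subseteq> B" using inbasis assms by blast
  have "(\<Sum>x\<in>B. (if x = g then 1 else 0) *\<^sub>R x) = (\<Sum>x\<in>B. if x = g then x else 0)"
    by (rule sum.cong) auto
  also have "\<dots> = g" using B lb_props(1)[OF B(1)] by (simp add: sum.delta)
  finally have "g \<in> int_span B"
    unfolding int_span_def
    by (intro CollectI exI[of _ "\<lambda>x. if x = g then 1 else 0"]) auto
  then show ?thesis using lb_props(5)[OF B(1)] by auto
qed

lemma rep_sum:
  assumes "finite B" "independent B" "b \<in> B"
  shows "representation B (\<Sum>x\<in>B. c x *\<^sub>R x) b = c b"
proof -
  have "representation B (\<Sum>x\<in>B. c x *\<^sub>R x) b = (\<Sum>x\<in>B. representation B (c x *\<^sub>R x) b)"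
    using assms by (subst real_vector.representation_sum) (auto intro: real_vector.span_scale real_vector.span_base)
  also have "\<dots> = (\<Sum>x\<in>B. c x * (if b = x then 1 else 0))"
    by (rule sum.cong, simp) (simp add: real_vector.representation_scale real_vector.span_base assms real_vector.representation_basis)
  also have "\<dots> = c b" using assms by (simp add: if_distrib cong: if_cong)
  finally show ?thesis .
qed

lemma pos_hull_mono:
  assumes "\<sigma> \<subseteq> \<delta>" "finite \<delta>" shows "pos_hull \<sigma> \<subseteq> pos_hull \<delta>"
proof
  fix y assume "y \<in> pos_hull \<sigma>"
  then obtain c where c: "\<forall>x\<in>\<sigma>. c x \<ge> 0" "y = (\<Sum>x\<in>\<sigma>. c x *\<^sub>R x)" unfolding pos_hull_def by auto
  let ?c = "\<lambda>x. if x \<in> \<sigma> then c x else 0"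
  have "(\<Sum>x\<in>\<delta>. ?c x *\<^sub>R x) = (\<Sum>x\<in>\<sigma>. c x *\<^sub>R x)"
    by (rule sum.mono_neutral_cong_right) (use assms in auto)
  then show "y \<in> pos_hull \<delta>" unfolding pos_hull_def using c by (auto intro!: exI[of _ ?c])
qed

lemma pos_hull_rep:
  fixes B :: "(real^'n) set"
  assumes "lattice_basis B" "\<delta> \<subseteq> B"
  shows "pos_hull \<delta> = {x. (\<forall>b\<in>\<delta>. representation B x b \<ge> 0) \<and> (\<forall>b\<in>B-\<delta>. representation B x b = 0)}"
proof -
  note L = lb_props[OF assms(1)]
  have fd: "finite \<delta>" using finite_subset[OF assms(2) L(1)] .
  show ?thesis
  proof (intro set_eqI iffI)
    fix x assume "x \<in> pos_hull \<delta>"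
    then obtain c where c: "\<forall>y\<in>\<delta>. c y \<ge> 0" "x = (\<Sum>y\<in>\<delta>. c y *\<^sub>R y)" unfolding pos_hull_def by auto
    let ?c = "\<lambda>y. if y \<in> \<delta> then c y else 0"
    have "(\<Sum>y\<in>B. ?c y *\<^sub>R y) = (\<Sum>y\<in>\<delta>. c y *\<^sub>R y)"
      by (rule sum.mono_neutral_cong_right) (use assms L in auto)
    then have "x = (\<Sum>y\<in>B. ?c y *\<^sub>R y)" using c by simp
    then have "\<And>b. b \<in> B \<Longrightarrow> representation B x b = ?c b" using rep_sum[OF L(1) L(2)] by simp
    then show "x \<in> {x. (\<forall>b\<in>\<delta>. representation B x b \<ge> 0) \<and> (\<forall>b\<in>B-\<delta>. representation B x b = 0)}"
      using c assms by auto
  next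
    fix x assume x: "x \<in> {x. (\<forall>b\<in>\<delta>. representation B x b \<ge> 0) \<and> (\<forall>b\<in>B-\<delta>. representation B x b = 0)}"
    have "x = (\<Sum>b\<in>B. representation B x b *\<^sub>R b)"
      using L by (simp add: real_vector.sum_representation_eq)
    also have "\<dots> = (\<Sum>b\<in>\<delta>. representation B x b *\<^sub>R b)"
      by (rule sum.mono_neutral_right) (use assms L x in auto)
    finally show "x \<in> pos_hull \<delta>" unfolding pos_hull_def using x by auto
  qed
qed

lemma rep_cont:
  fixes B :: "(real^'n) set"
  assumes "lattice_basis B"
  shows "continuous_on UNIV (\<lambda>x. representation B x b)"
proof -
  note L = lb_props[OF assms(1)]
  have e: "((*\<^sub>R) :: real \<Rightarrow> real \<Rightarrow> real) = (*)" by (auto simp: fun_eq_iff)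
  have "linear (\<lambda>x. representation B x b)"
    using real_vector.linear_representation[OF L(2) L(4), of b] unfolding e[symmetric] linear_def .
  then show ?thesis by (simp add: linear_continuous_on linear_conv_bounded_linear)
qed

lemma closed_pos_hull:
  assumes "\<delta> \<in> \<Delta>" shows "closed (pos_hull \<delta>)"
proof -
  obtain B where B: "lattice_basis B" "\<delta> \<subseteq> B" using inbasis assms by blast
  have "pos_hull \<delta> = (\<Inter>b\<in>\<delta>. {x. 0 \<le> representation B x b}) \<inter> (\<Inter>b\<in>B-\<delta>. {x. representation B x b = 0})"
    using pos_hull_rep[OF B] by auto
  also have "closed \<dots>"
    using rep_cont[OF B(1)]
    by (intro closed_Int closed_INT ballI closed_Collect_le closed_Collect_eq continuous_on_const) auto
  finally show ?thesis .
qed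

lemma sum_not_in_smaller:
  assumes "\<gamma> \<in> \<Delta>" "\<delta> \<in> \<Delta>" "\<not> \<gamma> \<subseteq> \<delta>"
  shows "(\<Sum>x\<in>\<gamma>. x) \<notin> pos_hull \<delta>"
proof
  assume a: "(\<Sum>x\<in>\<gamma>. x) \<in> pos_hull \<delta>"
  have "(\<Sum>x\<in>\<gamma>. x) \<in> pos_hull \<gamma>" unfolding pos_hull_def by (auto intro!: exI[of _ "\<lambda>_. 1"])
  with a have "(\<Sum>x\<in>\<gamma>. x) \<in> pos_hull (\<gamma> \<inter> \<delta>)" using inter[OF assms(1,2)] by auto
  then obtain c where c: "(\<Sum>x\<in>\<gamma>. x) = (\<Sum>y\<in>\<gamma>\<inter>\<delta>. c y *\<^sub>R y)" unfolding pos_hull_def by auto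
  let ?c = "\<lambda>y. if y \<in> \<delta> then c y else 0"
  have fg: "finite \<gamma>" "independent \<gamma>" using assms cone_fin cone_indep by auto
  have "(\<Sum>y\<in>\<gamma>. ?c y *\<^sub>R y) = (\<Sum>y\<in>\<gamma>\<inter>\<delta>. c y *\<^sub>R y)"
    by (rule sum.mono_neutral_cong_right) (use fg in auto)
  with c have e: "(\<Sum>y\<in>\<gamma>. ?c y *\<^sub>R y) = (\<Sum>x\<in>\<gamma>. (\<lambda>_. 1::real) x *\<^sub>R x)" by simp
  obtain b where b: "b \<in> \<gamma>" "b \<notin> \<delta>" using assms by auto
  have "representation \<gamma> (\<Sum>y\<in>\<gamma>. ?c y *\<^sub>R y) b = ?c b" by (rule rep_sum[OF fg b(1)])
  moreover have "representation \<gamma> (\<Sum>x\<in>\<gamma>. (\<lambda>_. 1::real) x *\<^sub>R x) b = 1" by (rule rep_sum[OF fg b(1)])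
  ultimately show False using e b by simp
qed

lemma LC:
  assumes "\<gamma> \<in> \<Delta>"
  shows "\<exists>l>0. l \<le> 1 \<and> (\<exists>\<delta>\<in>\<Delta>. \<gamma> \<subseteq> \<delta> \<and> (\<Sum>x\<in>\<gamma>. x) + l *\<^sub>R d \<in> pos_hull \<delta>)"
proof -
  define p where "p = (\<Sum>x\<in>\<gamma>. x)"
  define A where "A = {\<delta>\<in>\<Delta>. \<not> \<gamma> \<subseteq> \<delta>}"
  have fA: "finite A" using finDelta A_def by auto
  have tl: "((\<lambda>l::real. p + l *\<^sub>R d) \<longlongrightarrow> p) (at_right 0)"
    by (intro tendsto_eq_intros) auto
  have "\<forall>\<delta>\<in>A. \<forall>\<^sub>F l in at_right 0. p + l *\<^sub>R d \<in> - pos_hull \<delta>"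
  proof
    fix \<delta> assume "\<delta> \<in> A"
    then have "\<delta> \<in> \<Delta>" "p \<in> - pos_hull \<delta>" using sum_not_in_smaller assms unfolding A_def p_def by auto
    then show "\<forall>\<^sub>F l in at_right 0. p + l *\<^sub>R d \<in> - pos_hull \<delta>"
      using topological_tendstoD[OF tl, of "- pos_hull \<delta>"] closed_pos_hull by (simp add: open_Compl)
  qed
  then have "\<forall>\<^sub>F l in at_right 0. \<forall>\<delta>\<in>A. p + l *\<^sub>R d \<in> - pos_hull \<delta>"
    by (rule eventually_ball_finite[OF fA])
  then obtain b where b: "b > 0" "\<And>y. y > 0 \<Longrightarrow> y < b \<Longrightarrow> \<forall>\<delta>\<in>A. p + y *\<^sub>R d \<in> - pos_hull \<delta>"
    unfolding eventually_at_right[of 0 1, OF zero_less_one] by auto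
  define l where "l = min b 1 / 2"
  have l: "l > 0" "l < b" "l \<le> 1" using b(1) unfolding l_def by auto
  obtain \<delta> where \<delta>: "\<delta> \<in> \<Delta>" "p + l *\<^sub>R d \<in> pos_hull \<delta>" using complete by blast
  have "\<delta> \<notin> A" using b(2)[OF l(1) l(2)] \<delta> by auto
  then show ?thesis using \<delta> l unfolding A_def p_def by auto
qed

lemma cone_card: "\<sigma> \<in> \<Delta> \<Longrightarrow> card \<sigma> \<le> CARD('n)"
  using inbasis lb_props card_mono by metis

lemma max_exists:
  assumes "\<sigma> \<in> \<Delta>" shows "\<exists>\<delta>. maximal_cone \<Delta> \<delta> \<and> \<sigma> \<subseteq> \<delta>"
proof -
  have "\<exists>x. (x \<in> \<Delta> \<and> \<sigma> \<subseteq> x) \<and> (\<forall>y. (y \<in> \<Delta> \<and> \<sigma> \<subseteq> y) \<longrightarrow> card y \<le> card x)"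
    by (rule ex_has_greatest_nat[where b = "Suc CARD('n)"]) (use assms cone_card in \<open>auto simp: less_Suc_eq_le\<close>)
  then obtain \<delta> where d: "\<delta> \<in> \<Delta>" "\<sigma> \<subseteq> \<delta>" "\<And>y. y \<in> \<Delta> \<Longrightarrow> \<sigma> \<subseteq> y \<Longrightarrow> card y \<le> card \<delta>" by blast
  have "\<not> (\<exists>\<sigma>'\<in>\<Delta>. \<delta> \<subset> \<sigma>')"
  proof
    assume "\<exists>\<sigma>'\<in>\<Delta>. \<delta> \<subset> \<sigma>'"
    then obtain \<sigma>' where "\<sigma>' \<in> \<Delta>" "\<delta> \<subset> \<sigma>'" by blast
    moreover then have "card \<delta> < card \<sigma>'" using cone_fin psubset_card_mono by blast
    ultimately show False using d(2) d(3)[of \<sigma>'] by auto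
  qed
  then show ?thesis using d unfolding maximal_cone_def by auto
qed

lemma pos_hull_span: "pos_hull \<sigma> \<subseteq> span \<sigma>"
  unfolding pos_hull_def
  by (auto intro!: real_vector.span_sum intro: real_vector.span_scale real_vector.span_base)

lemma max_full:
  assumes "maximal_cone \<Delta> \<sigma>" shows "lattice_basis \<sigma>"
proof -
  have s: "\<sigma> \<in> \<Delta>" using assms unfolding maximal_cone_def by auto
  obtain B where B: "lattice_basis B" "\<sigma> \<subseteq> B" using inbasis s by blast
  have "B \<subseteq> \<sigma>"
  proof
    fix b assume b: "b \<in> B"
    show "b \<in> \<sigma>"
    proof (rule ccontr)
      assume nb: "b \<notin> \<sigma>"
      obtain l \<delta> where l: "l > 0" "\<delta> \<in> \<Delta>" "\<sigma> \<subseteq> \<delta>" "(\<Sum>x\<in>\<sigma>. x) + l *\<^sub>R b \<in> pos_hull \<delta>"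
        using LC[OF s, of b] by blast
      have "\<delta> = \<sigma>" using assms l(2,3) unfolding maximal_cone_def by blast
      then have "(\<Sum>x\<in>\<sigma>. x) + l *\<^sub>R b \<in> span \<sigma>" using l(4) pos_hull_span by auto
      moreover have "(\<Sum>x\<in>\<sigma>. x) \<in> span \<sigma>" by (auto intro!: real_vector.span_sum intro: real_vector.span_base)
      ultimately have "l *\<^sub>R b \<in> span \<sigma>" using real_vector.span_diff by force
      then have "(1/l) *\<^sub>R (l *\<^sub>R b) \<in> span \<sigma>" using real_vector.span_scale by blast
      then have "b \<in> span \<sigma>" using l(1) by simp
      then have "b \<in> span (B - {b})" using B(2) nb real_vector.span_mono[of \<sigma> "B - {b}"] by auto
      then show False using lb_props(2)[OF B(1)] b real_vector.dependent_def by blast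
    qed
  qed
  then show ?thesis using B by auto
qed

definition crd :: "(real^'n) set \<Rightarrow> real^'n \<Rightarrow> real^'n \<Rightarrow> real" where
  "crd \<sigma> x b = representation \<sigma> x b"

definition U :: "(real^'n) set \<Rightarrow> (real^'n) set \<Rightarrow> real^'n \<Rightarrow> real" where
  "U \<sigma> T x = (\<Sum>b\<in>\<sigma>-T. crd \<sigma> x b)"

lemma mc_props:
  assumes "maximal_cone \<Delta> \<sigma>"
  shows "finite \<sigma>" "independent \<sigma>" "span \<sigma> = UNIV" "\<sigma> \<in> \<Delta>" "int_span \<sigma> = {x. lattice_pt x}"
  using lb_props[OF max_full[OF assms]] assms unfolding maximal_cone_def by auto

lemma crd_expand:
  assumes "maximal_cone \<Delta> \<sigma>" shows "x = (\<Sum>b\<in>\<sigma>. crd \<sigma> x b *\<^sub>R b)"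
  using mc_props[OF assms] unfolding crd_def by (simp add: real_vector.sum_representation_eq)

lemma crd_add:
  assumes "maximal_cone \<Delta> \<sigma>" shows "crd \<sigma> (x + y) b = crd \<sigma> x b + crd \<sigma> y b"
  using mc_props[OF assms] unfolding crd_def by (simp add: real_vector.representation_add)

lemma crd_scale:
  assumes "maximal_cone \<Delta> \<sigma>" shows "crd \<sigma> (r *\<^sub>R x) b = r * crd \<sigma> x b"
  using mc_props[OF assms] unfolding crd_def by (simp add: real_vector.representation_scale)

lemma crd_sum:
  assumes "maximal_cone \<Delta> \<sigma>" shows "crd \<sigma> (\<Sum>i\<in>I. f i) b = (\<Sum>i\<in>I. crd \<sigma> (f i) b)"
  using mc_props[OF assms] unfolding crd_def by (simp add: real_vector.representation_sum)

lemma crd_basis: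
  assumes "maximal_cone \<Delta> \<sigma>" "g \<in> \<sigma>" shows "crd \<sigma> g b = (if b = g then 1 else 0)"
  using mc_props[OF assms(1)] assms(2) unfolding crd_def by (simp add: real_vector.representation_basis)

lemma crd_out:
  assumes "maximal_cone \<Delta> \<sigma>" "b \<notin> \<sigma>" shows "crd \<sigma> x b = 0"
  using real_vector.representation_ne_zero assms unfolding crd_def by blast

lemma crd_int:
  assumes "maximal_cone \<Delta> \<sigma>" "lattice_pt x" shows "crd \<sigma> x b \<in> \<int>"
proof (cases "b \<in> \<sigma>")
  case True
  have "x \<in> int_span \<sigma>" using mc_props(5)[OF assms(1)] assms(2) by auto
  then obtain c where c: "\<forall>y\<in>\<sigma>. c y \<in> \<int>" "x = (\<Sum>y\<in>\<sigma>. c y *\<^sub>R y)" unfolding int_span_def by auto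
  have "crd \<sigma> x b = c b" unfolding crd_def c(2) by (rule rep_sum) (use mc_props[OF assms(1)] True in auto)
  then show ?thesis using c(1) True by auto
qed (simp add: crd_out[OF assms(1)])

lemma crd_pos:
  assumes "maximal_cone \<Delta> \<sigma>" "y \<in> pos_hull \<sigma>" shows "crd \<sigma> y b \<ge> 0"
proof (cases "b \<in> \<sigma>")
  case True
  then show ?thesis using pos_hull_rep[OF max_full[OF assms(1)], of \<sigma>] assms(2) unfolding crd_def by auto
qed (simp add: crd_out[OF assms(1)])

lemma U_lin:
  assumes "maximal_cone \<Delta> \<sigma>" shows "U \<sigma> T (r *\<^sub>R x + q *\<^sub>R y) = r * U \<sigma> T x + q * U \<sigma> T y"
  unfolding U_def using assms by (simp add: crd_add crd_scale sum.distrib sum_distrib_left)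

lemma U_sum:
  assumes "maximal_cone \<Delta> \<sigma>" shows "U \<sigma> T (\<Sum>i\<in>I. f i) = (\<Sum>i\<in>I. U \<sigma> T (f i))"
  unfolding U_def using assms by (simp add: crd_sum sum.swap[of _ "\<sigma> - T"])

lemma U_sum_scale:
  assumes "maximal_cone \<Delta> \<sigma>" shows "U \<sigma> T (\<Sum>i\<in>I. c i *\<^sub>R f i) = (\<Sum>i\<in>I. c i * U \<sigma> T (f i))"
  unfolding U_sum[OF assms] unfolding U_def using assms by (simp add: crd_scale sum_distrib_left)

lemma U_basis:
  assumes "maximal_cone \<Delta> \<sigma>" "g \<in> \<sigma>" shows "U \<sigma> T g = (if g \<in> T then 0 else 1)"
proof -
  have f: "finite (\<sigma> - T)" using mc_props[OF assms(1)] by auto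
  show ?thesis unfolding U_def crd_basis[OF assms] using f assms(2) by (simp add: sum.delta)
qed

lemma U_int:
  assumes "maximal_cone \<Delta> \<sigma>" "lattice_pt x" shows "U \<sigma> T x \<in> \<int>"
  unfolding U_def using crd_int[OF assms] by (intro Ints_sum) auto

lemma fano_U:
  assumes m: "maximal_cone \<Delta> \<sigma>" and t: "\<tau> \<subseteq> \<sigma>" and g: "g \<notin> \<sigma>" "insert g \<tau> \<in> \<Delta>"
  shows "U \<sigma> \<tau> g < 1"
proof -
  have "\<tau> \<in> \<Delta>" using subcl mc_props(4)[OF m] t by blast
  then have "fano_orbit_closure \<Delta> \<tau>" using fano_all by auto
  then obtain u where u: "\<forall>\<rho>\<in>\<tau>. u \<bullet> \<rho> = 0" "\<forall>\<rho>\<in>\<sigma> - \<tau>. u \<bullet> \<rho> = 1"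
     "\<forall>\<rho>. \<rho> \<notin> \<sigma> \<and> insert \<rho> \<tau> \<in> \<Delta> \<longrightarrow> u \<bullet> \<rho> < 1"
    using m t unfolding fano_orbit_closure_def by blast
  have fs: "finite \<sigma>" using mc_props[OF m] by auto
  have "u \<bullet> g = u \<bullet> (\<Sum>b\<in>\<sigma>. crd \<sigma> g b *\<^sub>R b)" using crd_expand[OF m] by metis
  also have "\<dots> = (\<Sum>b\<in>\<sigma>. crd \<sigma> g b * (u \<bullet> b))" by (simp add: inner_sum_right)
  also have "\<dots> = (\<Sum>b\<in>\<sigma>-\<tau>. crd \<sigma> g b * (u \<bullet> b)) + (\<Sum>b\<in>\<tau>. crd \<sigma> g b * (u \<bullet> b))"
    by (rule sum.subset_diff[OF t fs])
  also have "\<dots> = U \<sigma> \<tau> g" unfolding U_def using u by simp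
  finally show ?thesis using u(3) g by auto
qed

lemma int_lt2: "(x::real) \<in> \<int> \<Longrightarrow> x < 2 \<Longrightarrow> x \<le> 1"
  by (metis Ints_cases of_int_le_1_iff of_int_less_numeral_iff int_one_le_iff_zero_less
       linorder_not_le zless_imp_add1_zle add_le_cancel_right one_add_one)

lemma ray_sub: "\<sigma> \<in> \<Delta> \<Longrightarrow> g \<in> \<sigma> \<Longrightarrow> {g} \<in> \<Delta>"
  using subcl by blast

lemma wall:
  assumes ms: "maximal_cone \<Delta> \<sigma>" and t: "t \<in> \<sigma>" and md: "maximal_cone \<Delta> \<delta>"
    and sd: "\<sigma> - {t} \<subseteq> \<delta>" and g: "g \<in> \<delta>" "g \<notin> \<sigma>"
  shows "crd \<sigma> g t \<ge> -1"
proof -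
  have cs: "card \<sigma> = CARD('n)" and cd: "card \<delta> = CARD('n)"
    using lb_props(3) max_full ms md by auto
  have fs: "finite \<sigma>" "finite \<delta>" using mc_props ms md by auto
  have "card (insert g (\<sigma> - {t})) = card \<delta>"
    using cs cd fs t g by (simp add: card_Diff_singleton)
  then have de: "insert g (\<sigma> - {t}) = \<delta>"
    by (intro card_subset_eq) (use fs sd g in auto)
  have "lattice_pt t" using ray_lattice ray_sub mc_props(4)[OF ms] t by blast
  then have "t \<in> int_span \<delta>" using mc_props(5)[OF md] by auto
  then obtain m where m: "\<forall>y\<in>\<delta>. m y \<in> \<int>" "t = (\<Sum>y\<in>\<delta>. m y *\<^sub>R y)" unfolding int_span_def by auto
  have "1 = crd \<sigma> t t" using crd_basis[OF ms t] by simp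
  also have "\<dots> = (\<Sum>y\<in>\<delta>. m y * crd \<sigma> y t)"
    by (subst m(2)) (simp add: crd_sum[OF ms] crd_scale[OF ms])
  also have "\<dots> = m g * crd \<sigma> g t + (\<Sum>y\<in>\<sigma>-{t}. m y * crd \<sigma> y t)"
    unfolding de[symmetric] using fs g by (subst sum.insert) auto
  also have "(\<Sum>y\<in>\<sigma>-{t}. m y * crd \<sigma> y t) = 0"
    by (rule sum.neutral) (use crd_basis[OF ms] in auto)
  finally have e: "m g * crd \<sigma> g t = 1" by simp
  have "lattice_pt g" using ray_lattice ray_sub mc_props(4)[OF md] g by blast
  then have "crd \<sigma> g t \<in> \<int>" using crd_int[OF ms] by auto
  then obtain E where E: "crd \<sigma> g t = of_int E" using Ints_cases by metis
  obtain M where M: "m g = of_int M" using m(1) g Ints_cases by metis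
  have "of_int (M * E) = (1::real)" using e E M by simp
  then have "M * E = 1" by linarith
  then have "E = 1 \<or> E = -1" using zmult_eq_1_iff by auto
  then show ?thesis using E by auto
qed

lemma claimC:
  "card T = k \<Longrightarrow> maximal_cone \<Delta> \<sigma> \<Longrightarrow> T \<subseteq> \<sigma> \<Longrightarrow> {s} \<in> \<Delta> \<Longrightarrow> U \<sigma> T s \<le> 1"
proof (induction k arbitrary: T \<sigma> s)
  case 0
  then have "T = {}" using mc_props(1)[OF "0.prems"(2)] finite_subset by (metis card_0_eq)
  show ?case
  proof (cases "s \<in> \<sigma>")
    case True then show ?thesis using U_basis[OF "0.prems"(2)] by simp
  next
    case False
    then show ?thesis using fano_U[OF "0.prems"(2), of "{}" s] \<open>T = {}\<close> "0.prems" by auto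
  qed
next
  case (Suc k)
  note ms = Suc.prems(2)
  have fT: "finite T" using mc_props(1)[OF ms] Suc.prems(3) finite_subset by auto
  obtain t where tT: "t \<in> T" using Suc.prems(1) by fastforce
  define T' where "T' = T - {t}"
  have cT': "card T' = k" using Suc.prems(1) tT fT unfolding T'_def by simp
  have ts: "t \<in> \<sigma>" using tT Suc.prems(3) by auto
  have IH: "\<And>\<sigma>' s'. maximal_cone \<Delta> \<sigma>' \<Longrightarrow> T' \<subseteq> \<sigma>' \<Longrightarrow> {s'} \<in> \<Delta> \<Longrightarrow> U \<sigma>' T' s' \<le> 1"
    using Suc.IH[OF cT'] by blast
  show ?case
  proof (rule ccontr)
    assume "\<not> U \<sigma> T s \<le> 1"
    then have Us: "U \<sigma> T s > 1" by simp
    define \<gamma> where "\<gamma> = \<sigma> - {t}"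
    have g\<Delta>: "\<gamma> \<in> \<Delta>" using subcl mc_props(4)[OF ms] unfolding \<gamma>_def by blast
    define p where "p = (\<Sum>x\<in>\<gamma>. x)"
    obtain l \<delta>0 where l: "l > 0" "l \<le> 1" "\<delta>0 \<in> \<Delta>" "\<gamma> \<subseteq> \<delta>0" "p + l *\<^sub>R (s - p) \<in> pos_hull \<delta>0"
      using LC[OF g\<Delta>, of "s - p"] unfolding p_def by blast
    obtain \<delta> where md: "maximal_cone \<Delta> \<delta>" "\<delta>0 \<subseteq> \<delta>" using max_exists[OF l(3)] by blast
    define y where "y = p + l *\<^sub>R (s - p)"
    have yd: "y \<in> pos_hull \<delta>" using l(5) pos_hull_mono[OF md(2)] mc_props(1)[OF md(1)] unfolding y_def by blast
    have y2: "y = (1 - l) *\<^sub>R p + l *\<^sub>R s" unfolding y_def by (simp add: algebra_simps)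
    have gd: "\<gamma> \<subseteq> \<delta>" using l(4) md(2) by auto
    have T'd: "T' \<subseteq> \<delta>" using gd unfolding T'_def \<gamma>_def using Suc.prems(3) by auto
    have T'\<sigma>: "T' \<subseteq> \<sigma>" using Suc.prems(3) unfolding T'_def by auto
    have pg: "\<And>g. g \<in> \<gamma> \<Longrightarrow> U \<delta> T' g \<le> U \<sigma> T g"
    proof -
      fix g assume g: "g \<in> \<gamma>"
      have gs: "g \<in> \<sigma>" "g \<noteq> t" using g unfolding \<gamma>_def by auto
      show "U \<delta> T' g \<le> U \<sigma> T g"
      proof (cases "g \<in> T")
        case True
        then have "g \<in> T'" using gs unfolding T'_def by auto
        then show ?thesis using U_basis[OF md(1), of g T'] U_basis[OF ms gs(1), of T] gd g True by auto
      next
        case False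
        have "U \<delta> T' g \<le> 1" using IH[OF md(1) T'd] ray_sub[OF mc_props(4)[OF ms] gs(1)] by auto
        then show ?thesis using U_basis[OF ms gs(1), of T] False by auto
      qed
    qed
    have Up: "U \<delta> T' p \<le> U \<sigma> T p"
      unfolding p_def U_sum[OF md(1)] U_sum[OF ms] by (rule sum_mono) (rule pg)
    have Us': "U \<delta> T' s \<le> 1" using IH[OF md(1) T'd Suc.prems(4)] .
    have A: "U \<delta> T' y < U \<sigma> T y"
    proof -
      have "U \<delta> T' y = (1 - l) * U \<delta> T' p + l * U \<delta> T' s" unfolding y2 by (rule U_lin[OF md(1)])
      also have "\<dots> < (1 - l) * U \<sigma> T p + l * U \<sigma> T s"
        using Up Us' Us l(1,2) by (intro add_le_less_mono mult_left_mono mult_strict_left_mono) auto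
      also have "\<dots> = U \<sigma> T y" unfolding y2 by (rule U_lin[OF ms, symmetric])
      finally show ?thesis .
    qed
    have dg: "\<And>g. g \<in> \<delta> \<Longrightarrow> U \<sigma> T g \<le> U \<delta> T' g"
    proof -
      fix g assume g: "g \<in> \<delta>"
      show "U \<sigma> T g \<le> U \<delta> T' g"
      proof (cases "g \<in> T'")
        case True
        then have "g \<in> T" "g \<in> \<sigma>" using T'\<sigma> unfolding T'_def by auto
        then show ?thesis using U_basis[OF md(1) g, of T'] U_basis[OF ms, of g T] True by auto
      next
        case False
        then have U1: "U \<delta> T' g = 1" using U_basis[OF md(1) g, of T'] by auto
        show ?thesis
        proof (cases "g \<in> \<sigma>")
          case True then show ?thesis using U_basis[OF ms True, of T] U1 by auto
        next
          case gn: False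
          have "insert g T' \<subseteq> \<delta>" using g T'd by auto
          then have "insert g T' \<in> \<Delta>" using subcl mc_props(4)[OF md(1)] by blast
          then have lt: "U \<sigma> T' g < 1" using fano_U[OF ms T'\<sigma> gn] by auto
          have "\<sigma> - T' = insert t (\<sigma> - T)" using tT ts Suc.prems(3) unfolding T'_def by auto
          then have "U \<sigma> T' g = crd \<sigma> g t + U \<sigma> T g"
            unfolding U_def using mc_props(1)[OF ms] tT by (simp add: sum.insert)
          moreover have "crd \<sigma> g t \<ge> -1"
            by (rule wall[OF ms ts md(1) _ g gn]) (use gd in \<open>simp add: \<gamma>_def\<close>)
          ultimately have "U \<sigma> T g < 2" using lt by linarith
          moreover have "U \<sigma> T g \<in> \<int>"
            using U_int[OF ms] ray_lattice ray_sub[OF mc_props(4)[OF md(1)] g] by blast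
          ultimately show ?thesis using int_lt2 U1 by auto
        qed
      qed
    qed
    have yexp: "y = (\<Sum>g\<in>\<delta>. crd \<delta> y g *\<^sub>R g)" by (rule crd_expand[OF md(1)])
    have "U \<sigma> T y = (\<Sum>g\<in>\<delta>. crd \<delta> y g * U \<sigma> T g)"
      by (subst yexp) (rule U_sum_scale[OF ms])
    also have "\<dots> \<le> (\<Sum>g\<in>\<delta>. crd \<delta> y g * U \<delta> T' g)"
      by (rule sum_mono, rule mult_left_mono) (use dg crd_pos[OF md(1) yd] in auto)
    also have "\<dots> = U \<delta> T' y"
      by (subst (2) yexp) (rule U_sum_scale[OF md(1), symmetric])
    finally show False using A by simp
  qed
qed

lemma int_pos1: "(x::real) \<in> \<int> \<Longrightarrow> x > 0 \<Longrightarrow> x \<ge> 1"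
  by (metis Ints_cases of_int_0_less_iff of_int_1_le_iff zero_less_imp_eq_int int_one_le_iff_zero_less)

lemma final:
  fixes a :: "real^'n \<Rightarrow> int"
  assumes cone: "\<sigma>0 \<in> \<Delta>"
    and a_ge1: "\<forall>\<rho>\<in>\<sigma>0. a \<rho> \<ge> 1"
    and rho1: "\<rho>1 \<in> \<sigma>0" and a_ge2: "a \<rho>1 \<ge> 2"
    and S_rays: "S \<subseteq> ray_gens \<Delta>"
    and S_indep: "independent S"
    and eq: "(\<Sum>\<rho>\<in>S. \<rho>) = (\<Sum>\<rho>\<in>\<sigma>0. of_int (a \<rho>) *\<^sub>R \<rho>)"
  shows False
proof -
  obtain \<sigma>m where ms: "maximal_cone \<Delta> \<sigma>m" and s0: "\<sigma>0 \<subseteq> \<sigma>m" using max_exists[OF cone] by blast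
  have fS: "finite S" using S_indep eucl.independent_bound_general by blast
  have fm: "finite \<sigma>m" using mc_props(1)[OF ms] .
  define c where "c s b = crd \<sigma>m s b" for s b
  have ray: "\<And>s. s \<in> S \<Longrightarrow> {s} \<in> \<Delta>" using S_rays unfolding ray_gens_def by auto
  have cint: "\<And>s b. s \<in> S \<Longrightarrow> c s b \<in> \<int>" unfolding c_def using crd_int[OF ms] ray_lattice ray by blast
  have pos1: "\<And>s b b'. s \<in> S \<Longrightarrow> b \<in> \<sigma>m \<Longrightarrow> c s b > 0 \<Longrightarrow> c s b = 1 \<and> (b' \<in> \<sigma>m \<longrightarrow> b' \<noteq> b \<longrightarrow> c s b' \<le> 0)"
  proof -
    fix s b b' assume s: "s \<in> S" and b: "b \<in> \<sigma>m" and cb: "c s b > 0"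
    define T where "T = {x\<in>\<sigma>m. c s x \<le> 0}"
    have "U \<sigma>m T s \<le> 1" by (rule claimC[OF refl ms]) (use ray[OF s] in \<open>auto simp: T_def\<close>)
    then have le1: "(\<Sum>x\<in>\<sigma>m - T. c s x) \<le> 1" unfolding U_def c_def .
    have posT: "c s x \<ge> 1" if x: "x \<in> \<sigma>m - T" for x
    proof -
      have "c s x > 0" using x unfolding T_def by auto
      then show ?thesis using int_pos1[OF cint[OF s]] by blast
    qed
    have bT: "b \<in> \<sigma>m - T" using b cb unfolding T_def by auto
    have "c s b \<le> (\<Sum>x\<in>\<sigma>m - T. c s x)"
    proof (rule member_le_sum[OF bT])
      fix x assume "x \<in> \<sigma>m - T - {b}"
      then show "0 \<le> c s x" using posT[of x] by auto
    qed (use fm in auto)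
    then have c1: "c s b = 1" using le1 posT[OF bT] by linarith
    have "b' \<in> \<sigma>m \<longrightarrow> b' \<noteq> b \<longrightarrow> c s b' \<le> 0"
    proof (intro impI, rule ccontr)
      assume b': "b' \<in> \<sigma>m" "b' \<noteq> b" "\<not> c s b' \<le> 0"
      then have b'T: "b' \<in> \<sigma>m - T" unfolding T_def by auto
      have "(\<Sum>x\<in>{b,b'}. c s x) \<le> (\<Sum>x\<in>\<sigma>m - T. c s x)"
      proof (rule sum_mono2)
        show "finite (\<sigma>m - T)" using fm by auto
        show "{b, b'} \<subseteq> \<sigma>m - T" using bT b'T by auto
        fix x assume "x \<in> \<sigma>m - T - {b, b'}"
        then show "0 \<le> c s x" using posT[of x] by auto
      qed
      then show False using b'(2) posT[OF bT] posT[OF b'T] le1 by simp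
    qed
    then show "c s b = 1 \<and> (b' \<in> \<sigma>m \<longrightarrow> b' \<noteq> b \<longrightarrow> c s b' \<le> 0)" using c1 by auto
  qed
  have wc: "\<And>b. b \<in> \<sigma>m \<Longrightarrow> (\<Sum>s\<in>S. c s b) = (if b \<in> \<sigma>0 then of_int (a b) else 0)"
  proof -
    fix b assume b: "b \<in> \<sigma>m"
    have "(\<Sum>s\<in>S. c s b) = crd \<sigma>m (\<Sum>\<rho>\<in>S. \<rho>) b" unfolding c_def by (simp add: crd_sum[OF ms])
    also have "\<dots> = crd \<sigma>m (\<Sum>\<rho>\<in>\<sigma>0. of_int (a \<rho>) *\<^sub>R \<rho>) b" using eq by simp
    also have "\<dots> = (\<Sum>\<rho>\<in>\<sigma>0. of_int (a \<rho>) * crd \<sigma>m \<rho> b)"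
      by (simp add: crd_sum[OF ms] crd_scale[OF ms])
    also have "\<dots> = (\<Sum>\<rho>\<in>\<sigma>0. of_int (a \<rho>) * (if b = \<rho> then 1 else 0))"
    proof (rule sum.cong)
      fix \<rho> assume "\<rho> \<in> \<sigma>0"
      then have "\<rho> \<in> \<sigma>m" using s0 by blast
      then show "of_int (a \<rho>) * crd \<sigma>m \<rho> b = of_int (a \<rho>) * (if b = \<rho> then 1 else 0)"
        using crd_basis[OF ms] by simp
    qed simp
    also have "\<dots> = (if b \<in> \<sigma>0 then of_int (a b) else 0)"
      using cone_fin[OF cone] by (simp add: if_distrib sum.delta cong: if_cong)
    finally show "(\<Sum>s\<in>S. c s b) = (if b \<in> \<sigma>0 then of_int (a b) else 0)" .
  qed
  have wnn: "(\<Sum>s\<in>S. c s b) \<ge> 0" if b: "b \<in> \<sigma>m" for b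
  proof (cases "b \<in> \<sigma>0")
    case True then show ?thesis using wc[OF b] a_ge1 by force
  qed (use wc[OF b] in simp)
  define P where "P b = {s\<in>S. c s b > 0}" for b
  define J where "J = {b\<in>\<sigma>m. P b \<noteq> {}}"
  have zero: "\<And>b s. b \<in> \<sigma>m - J \<Longrightarrow> s \<in> S \<Longrightarrow> c s b = 0"
  proof -
    fix b s assume b: "b \<in> \<sigma>m - J" and s: "s \<in> S"
    have np: "\<forall>x\<in>S. 0 \<le> - c x b"
    proof
      fix x assume "x \<in> S"
      moreover have "P b = {}" using b unfolding J_def by auto
      ultimately show "0 \<le> - c x b" unfolding P_def by auto
    qed
    have e1: "(\<Sum>x\<in>S. - c x b) = - (\<Sum>x\<in>S. c x b)" by (rule sum_negf)
    have e2: "(\<Sum>x\<in>S. - c x b) \<ge> 0" by (rule sum_nonneg) (use np in auto)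
    have e3: "(\<Sum>x\<in>S. c x b) \<ge> 0" using wnn[of b] b by simp
    have "(\<Sum>x\<in>S. - c x b) = 0" using e1 e2 e3 by linarith
    then have "\<forall>x\<in>S. - c x b = 0" using sum_nonneg_eq_0_iff[OF fS, of "\<lambda>x. - c x b"] np by simp
    then show "c s b = 0" using s by auto
  qed
  have SJ: "S \<subseteq> span J"
  proof
    fix s assume s: "s \<in> S"
    have "s = (\<Sum>b\<in>\<sigma>m. c s b *\<^sub>R b)" unfolding c_def by (rule crd_expand[OF ms])
    also have "\<dots> = (\<Sum>b\<in>J. c s b *\<^sub>R b)"
      by (rule sum.mono_neutral_right) (use fm zero s J_def in auto)
    also have "\<dots> \<in> span J"
      by (auto intro!: real_vector.span_sum intro: real_vector.span_scale real_vector.span_base)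
    finally show "s \<in> span J" .
  qed
  have fJ: "finite J" using fm unfolding J_def by auto
  have cSJ: "card S \<le> card J"
  proof -
    have "card S \<le> dim (span J)" by (rule eucl.independent_card_le_dim[OF SJ S_indep])
    also have "\<dots> \<le> card J" by (rule dim_le_card[OF _ fJ]) auto
    finally show ?thesis .
  qed
  have r1m: "\<rho>1 \<in> \<sigma>m" using rho1 s0 by auto
  have "(\<Sum>s\<in>S. c s \<rho>1) \<le> (\<Sum>s\<in>S. if c s \<rho>1 > 0 then 1 else 0)"
  proof (rule sum_mono)
    fix s assume s: "s \<in> S"
    show "c s \<rho>1 \<le> (if c s \<rho>1 > 0 then 1 else 0)"
    proof (cases "c s \<rho>1 > 0")
      case True then show ?thesis using pos1[OF s r1m True, of \<rho>1] by simp
    qed simp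
  qed
  also have "\<dots> = of_nat (card (P \<rho>1))"
    unfolding P_def by (simp add: sum.If_cases fS) (simp only: Int_def mem_Collect_eq)
  finally have "of_nat (card (P \<rho>1)) \<ge> (2::real)" using wc[OF r1m] rho1 a_ge2 by simp
  then have cP: "card (P \<rho>1) \<ge> 2" by simp
  have fP: "finite (P \<rho>1)" using fS unfolding P_def by auto
  have "P \<rho>1 \<noteq> {}" using cP by (metis card.empty not_numeral_le_zero)
  then obtain s1 where s1: "s1 \<in> P \<rho>1" by blast
  have "card (P \<rho>1 - {s1}) \<ge> 1" using cP s1 fP by (simp add: card_Diff_singleton)
  then have "P \<rho>1 - {s1} \<noteq> {}" by (metis card.empty not_one_le_zero)
  then obtain s2 where s2: "s2 \<in> P \<rho>1" "s2 \<noteq> s1" by blast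
  define f where "f b = (SOME s. s \<in> P b)" for b
  have fPb: "\<And>b. b \<in> J \<Longrightarrow> f b \<in> P b" unfolding f_def J_def by (auto intro: someI_ex)
  have uniq: "\<And>s b b'. s \<in> P b \<Longrightarrow> s \<in> P b' \<Longrightarrow> b \<in> \<sigma>m \<Longrightarrow> b' \<in> \<sigma>m \<Longrightarrow> b = b'"
  proof (rule ccontr)
    fix s b b' assume h: "s \<in> P b" "s \<in> P b'" "b \<in> \<sigma>m" "b' \<in> \<sigma>m" "b \<noteq> b'"
    have "s \<in> S" "c s b > 0" "c s b' > 0" using h unfolding P_def by auto
    then show False using pos1[of s b b'] h by auto
  qed
  have Jm: "J \<subseteq> \<sigma>m" unfolding J_def by auto
  have inj: "inj_on f J"
  proof (rule inj_onI)
    fix x y assume "x \<in> J" "y \<in> J" "f x = f y"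
    then show "x = y" using uniq[of "f x" x y] fPb[of x] fPb[of y] Jm by auto
  qed
  have r1J: "\<rho>1 \<in> J" using s1 r1m unfolding J_def by auto
  obtain e where e: "e \<in> P \<rho>1" "e \<noteq> f \<rho>1"
  proof (cases "s1 = f \<rho>1")
    case True then show ?thesis using that[of s2] s2 by auto
  next
    case False then show ?thesis using that[of s1] s1 by auto
  qed
  have enot: "e \<notin> f ` J"
  proof
    assume "e \<in> f ` J"
    then obtain b where b: "b \<in> J" "e = f b" by auto
    then have "b = \<rho>1" using uniq[OF fPb[OF b(1)] _ _ r1m] e(1) Jm by auto
    then show False using b e by auto
  qed
  have sub: "insert e (f ` J) \<subseteq> S" using fPb e(1) unfolding P_def by auto
  have "card (insert e (f ` J)) = card J + 1"
    using enot fJ card_image[OF inj] by simp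
  then have "card J + 1 \<le> card S" using card_mono[OF fS sub] by simp
  then show False using cSJ by simp
qed

end

theorem lemma3p4:
  fixes \<Delta> :: "(real^'n) set set"
    and \<sigma> :: "(real^'n) set"
    and a :: "real^'n \<Rightarrow> int"
    and \<rho>1 :: "real^'n"
    and S :: "(real^'n) set"
  assumes fan: "complete_smooth_fan \<Delta>"
    and fano_all: "\<forall>\<tau>\<in>\<Delta>. fano_orbit_closure \<Delta> \<tau>"
    and cone: "\<sigma> \<in> \<Delta>"
    and a_ge1: "\<forall>\<rho>\<in>\<sigma>. a \<rho> \<ge> 1"
    and rho1: "\<rho>1 \<in> \<sigma>" and a_ge2: "a \<rho>1 \<ge> 2"
    and S_rays: "S \<subseteq> ray_gens \<Delta>"
    and S_indep: "independent S"
  shows "(\<Sum>\<rho>\<in>S. \<rho>) \<noteq> (\<Sum>\<rho>\<in>\<sigma>. of_int (a \<rho>) *\<^sub>R \<rho>)"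
proof
  assume eq: "(\<Sum>\<rho>\<in>S. \<rho>) = (\<Sum>\<rho>\<in>\<sigma>. of_int (a \<rho>) *\<^sub>R \<rho>)"
  interpret fanctx \<Delta> by (rule fanctx.intro[OF fan fano_all])
  show False by (rule final[OF cone a_ge1 rho1 a_ge2 S_rays S_indep eq])
qed

end
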